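(* Let $(\Omega,\mathcal F)$ be a measurable space with $\Sigma\neq\emptyset$, and let $v:\mathcal F\to\mathbb R$ be a non-decreasing continuous set function with $v(\emptyset)=0$. Let $f_n:\Omega\to\mathbb R$ ($n\in\mathbb N$) and $f:\Omega\to\mathbb R$ be measurable and Choquet integrable with respect to $v$, such that $f_n$ is pointwise non-decreasing in $n$ and $f=\lim_n f_n$ $v$-almost surely. Then $\lim_{n\to\infty}v(f_n)=v(f)$.
   Context: $\Sigma$ denotes the set of all classes $\mathcal I\subset\mathcal F$ that are chains (totally ordered by inclusion), contain $\emptyset$ and $\Omega$, and generate $\mathcal F$ as a $\sigma$-algebra. $v$ is non-decreasing if $v(A)\le v(B)$ for $A\subset B$. For $\mathcal I\in\Sigma$ let $\mathcal J$ be the algebra generated by $\mathcal I$, whose elements are the sets $\bigcup_{i=1}^n (C_i\cap D_i^c)$ with $C_1\supset D_1\supset\cdots\supset C_n\supset D_n$ in $\mathcal I$; define $\mu_{v,\mathcal I}(\bigcup_{i=1}^n (C_i\cap D_i^c))=\sum_{i=1}^n(v(C_i)-v(D_i))$. $v$ is continuous if for every $\mathcal I\in\Sigma$ this $\mu_{v,\mathcal I}$ is $\sigma$-additive on $\mathcal J$. The Choquet integral of a measurable $f$ is $v(f)=\lim_{y\to-\infty}\big(y\,v(\Omega)+\int_y^\infty v(\{\omega: f(\omega)>z\})\,dz\big)$ (Lebesgue integral), and $f$ is Choquet integrable if this is a well-defined real number. A set $N\in\mathcal F$ is $v$-null if $v(N\cup A)=v(N^c\cap A)=v(A)$ for all $A\in\mathcal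 F$; $f=\lim f_n$ $v$-almost surely means there is a $v$-null $N$ with $\lim f_n(\omega)=f(\omega)$ for all $\omega\in N^c$. *)

theory Defs
  imports "HOL-Analysis.Analysis"
begin

definition chain_gens :: "'a measure \<Rightarrow> 'a set set set" where
  "chain_gens M = {I. I \<subseteq> sets M \<and> (\<forall>A\<in>I. \<forall>B\<in>I. A \<subseteq> B \<or> B \<subseteq> A)
      \<and> {} \<in> I \<and> space M \<in> I \<and> sigma_sets (space M) I = sets M}"

definition chain_rep :: "'a set set \<Rightarrow> 'a set \<Rightarrow> nat \<Rightarrow> (nat \<Rightarrow> 'a set) \<Rightarrow> (nat \<Rightarrow> 'a set) \<Rightarrow> bool" where
  "chain_rep I A n C D \<longleftrightarrow>
     (\<forall>i<n. C i \<in> I \<and> D i \<in> I \<and> D i \<subseteq> C i) \<and>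
     (\<forall>i. Suc i < n \<longrightarrow> C (Suc i) \<subseteq> D i) \<and>
     A = (\<Union>i<n. C i - D i)"

definition chain_alg :: "'a set set \<Rightarrow> 'a set set" where
  "chain_alg I = {A. \<exists>n C D. chain_rep I A n C D}"

definition mu_chain :: "('a set \<Rightarrow> real) \<Rightarrow> 'a set set \<Rightarrow> 'a set \<Rightarrow> real" where
  "mu_chain v I A = (SOME x. \<exists>n C D. chain_rep I A n C D \<and> x = (\<Sum>i<n. v (C i) - v (D i)))"

definition nondecreasing_sf :: "'a measure \<Rightarrow> ('a set \<Rightarrow> real) \<Rightarrow> bool" where
  "nondecreasing_sf M v \<longleftrightarrow> (\<forall>A\<in>sets M. \<forall>B\<in>sets M. A \<subseteq> B \<longrightarrow> v A \<le> v B)"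

definition continuous_sf :: "'a measure \<Rightarrow> ('a set \<Rightarrow> real) \<Rightarrow> bool" where
  "continuous_sf M v \<longleftrightarrow> (\<forall>I\<in>chain_gens M. \<forall>A :: nat \<Rightarrow> 'a set.
      range A \<subseteq> chain_alg I \<longrightarrow> disjoint_family A \<longrightarrow> (\<Union>k. A k) \<in> chain_alg I \<longrightarrow>
      (\<lambda>k. mu_chain v I (A k)) sums mu_chain v I (\<Union>k. A k))"

definition choquet_aux :: "'a measure \<Rightarrow> ('a set \<Rightarrow> real) \<Rightarrow> ('a \<Rightarrow> real) \<Rightarrow> real \<Rightarrow> real" where
  "choquet_aux M v f y = y * v (space M) + (LBINT z:{y..}. v {\<omega>\<in>space M. f \<omega> > z})"

definition choquet_integrable :: "'a measure \<Rightarrow> ('a set \<Rightarrow> real) \<Rightarrow> ('a \<Rightarrow> real) \<Rightarrow> bool" where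
  "choquet_integrable M v f \<longleftrightarrow>
     (\<forall>y. set_integrable lborel {y..} (\<lambda>z. v {\<omega>\<in>space M. f \<omega> > z})) \<and>
     (\<exists>c. (choquet_aux M v f \<longlongrightarrow> c) at_bot)"

definition choquet :: "'a measure \<Rightarrow> ('a set \<Rightarrow> real) \<Rightarrow> ('a \<Rightarrow> real) \<Rightarrow> real" where
  "choquet M v f = Lim at_bot (choquet_aux M v f)"

definition v_null :: "'a measure \<Rightarrow> ('a set \<Rightarrow> real) \<Rightarrow> 'a set \<Rightarrow> bool" where
  "v_null M v N \<longleftrightarrow> N \<in> sets M \<and>
     (\<forall>A\<in>sets M. v (N \<union> A) = v A \<and> v ((space M - N) \<inter> A) = v A)"

end

theory Submission
  imports Defs
begin

lemma chain_rep_dec: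
  assumes "chain_rep I S n C D" "i < m" "m < n"
  shows "C m \<subseteq> D i"
  using assms(2,3)
proof (induction m)
  case 0 then show ?case by simp
next
  case (Suc m)
  have a: "C (Suc m) \<subseteq> D m" using assms(1) Suc.prems by (auto simp: chain_rep_def)
  show ?case
  proof (cases "i = m")
    case True then show ?thesis using a by simp
  next
    case False
    then have "i < m" using Suc.prems by simp
    then have "C m \<subseteq> D i" using Suc.IH Suc.prems by simp
    moreover have "D m \<subseteq> C m" using assms(1) Suc.prems by (auto simp: chain_rep_def)
    ultimately show ?thesis using a by blast
  qed
qed

lemma chain_rep_val:
  fixes v :: "'a set \<Rightarrow> real"
  assumes ch: "\<forall>A\<in>I. \<forall>B\<in>I. A \<subseteq> B \<or> B \<subseteq> A"
  shows "chain_rep I S n C D \<Longrightarrow> X \<in> I \<Longrightarrow> Y \<in> I \<Longrightarrow> Y \<subseteq> X \<Longrightarrow> S = X - Y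
    \<Longrightarrow> (\<Sum>i<n. v (C i) - v (D i)) = v X - v Y"
proof (induction n arbitrary: S X Y)
  case 0
  then have "X = Y" by (auto simp: chain_rep_def)
  then show ?case by simp
next
  case (Suc n)
  define S' where "S' = (\<Union>i<n. C i - D i)"
  have rep': "chain_rep I S' n C D" using Suc.prems(1) by (auto simp: chain_rep_def S'_def)
  have CnI: "C n \<in> I" "D n \<in> I" "D n \<subseteq> C n" using Suc.prems(1) by (auto simp: chain_rep_def)
  have S: "S = S' \<union> (C n - D n)" using Suc.prems(1) by (auto simp: chain_rep_def S'_def lessThan_Suc)
  have disj: "S' \<inter> C n = {}" using chain_rep_dec[OF Suc.prems(1)] by (auto simp: S'_def)
  show ?case
  proof (cases "C n - D n = {}")
    case True
    then have "C n = D n" using CnI by blast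
    moreover have "S' = X - Y" using S True Suc.prems by simp
    ultimately show ?thesis using Suc.IH[OF rep' Suc.prems(2,3,4)] by simp
  next
    case False
    then obtain p where p: "p \<in> C n" "p \<notin> D n" by blast
    have pS: "p \<in> X" "p \<notin> Y" using p S Suc.prems(5) by auto
    have DX: "D n \<subseteq> X" using ch CnI(2) Suc.prems(2) p pS by blast
    have YC: "Y \<subseteq> C n" using ch CnI(1) Suc.prems(3) p pS by blast
    have CX: "C n \<subseteq> X" using DX S Suc.prems(5) by blast
    have YD: "Y \<subseteq> D n"
    proof -
      have "D n \<subseteq> Y \<or> Y \<subseteq> D n" using ch CnI(2) Suc.prems(3) by blast
      moreover have "D n \<subseteq> Y \<Longrightarrow> Y \<subseteq> D n" using YC S Suc.prems(5) by blast
      ultimately show ?thesis by blast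
    qed
    have DY: "D n \<subseteq> Y" using DX S Suc.prems(5) disj CnI(3) by blast
    have S'eq: "S' = X - C n" using S disj Suc.prems(5) YC CX YD DY by blast
    have "(\<Sum>i<n. v (C i) - v (D i)) = v X - v (C n)"
      using Suc.IH[OF rep' Suc.prems(2) CnI(1) CX S'eq] .
    then show ?thesis using YD DY by simp
  qed
qed

lemma mu_chain_diff:
  fixes v :: "'a set \<Rightarrow> real"
  assumes ch: "\<forall>A\<in>I. \<forall>B\<in>I. A \<subseteq> B \<or> B \<subseteq> A" and XY: "X \<in> I" "Y \<in> I" "Y \<subseteq> X"
  shows "mu_chain v I (X - Y) = v X - v Y"
  unfolding mu_chain_def
proof (rule someI2_ex)
  show "\<exists>x n C D. chain_rep I (X - Y) n C D \<and> x = (\<Sum>i<n. v (C i) - v (D i))"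
    apply (rule exI[of _ "v X - v Y"])
    apply (rule exI[of _ 1], rule exI[of _ "\<lambda>_. X"], rule exI[of _ "\<lambda>_. Y"])
    using XY by (auto simp: chain_rep_def)
next
  fix x assume "\<exists>n C D. chain_rep I (X - Y) n C D \<and> x = (\<Sum>i<n. v (C i) - v (D i))"
  then obtain n C D where "chain_rep I (X - Y) n C D" "x = (\<Sum>i<n. v (C i) - v (D i))" by blast
  then show "x = v X - v Y" using chain_rep_val[OF ch] XY by blast
qed

lemma cont_below:
  assumes I0: "I0 \<in> chain_gens M" and cont: "continuous_sf M v" and v0: "v {} = 0"
    and A: "\<And>n. A n \<in> sets M" and inc: "\<And>n. A n \<subseteq> A (Suc n)"
  shows "(\<lambda>n. v (A n)) \<longlonglongrightarrow> v (\<Union>n. A n)"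
proof -
  define U where "U = (\<Union>n. A n)"
  define Ap where "Ap k = (case k of 0 \<Rightarrow> {} | Suc j \<Rightarrow> A j)" for k
  define I where "I = {Ap k \<union> (A k \<inter> B) | k B. B \<in> I0} \<union> {U \<union> B | B. B \<in> I0}"
  from I0 have I0s: "I0 \<subseteq> sets M" "{} \<in> I0" "space M \<in> I0" "sigma_sets (space M) I0 = sets M"
    and I0c: "\<forall>A\<in>I0. \<forall>B\<in>I0. A \<subseteq> B \<or> B \<subseteq> A" by (auto simp: chain_gens_def)
  have mono: "\<And>k j. k \<le> j \<Longrightarrow> A k \<subseteq> A j" using inc by (rule lift_Suc_mono_le)
  have ApA: "Ap k \<subseteq> A k" for k by (cases k) (auto simp: Ap_def inc)
  have Ap_le: "k < j \<Longrightarrow> A k \<subseteq> Ap j" for k j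
    by (cases j) (auto simp: Ap_def intro!: mono)
  have Asp: "A k \<subseteq> space M" for k using A sets.sets_into_space by blast
  have AU: "A k \<subseteq> U" for k by (auto simp: U_def)
  have Us: "U \<in> sets M" unfolding U_def using A by auto
  have Usp: "U \<subseteq> space M" using Asp by (auto simp: U_def)
  have Aps: "Ap k \<in> sets M" for k by (cases k) (auto simp: Ap_def A)
  have I_sets: "I \<subseteq> sets M" using I0s(1) A Aps Us unfolding I_def by blast
  have c1: "Ap k \<union> (A k \<inter> B) \<subseteq> Ap j \<union> (A j \<inter> B') \<or> Ap j \<union> (A j \<inter> B') \<subseteq> Ap k \<union> (A k \<inter> B)"
    if "B \<in> I0" "B' \<in> I0" "k \<le> j" for k j B B'
  proof (cases "k = j")
    case True then show ?thesis using I0c that by blast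
  next
    case False then have "k < j" using that by simp
    then show ?thesis using Ap_le[of k j] ApA[of k] by blast
  qed
  have chain: "\<forall>X\<in>I. \<forall>Y\<in>I. X \<subseteq> Y \<or> Y \<subseteq> X"
  proof (intro ballI)
    fix X Y assume X: "X \<in> I" and Y: "Y \<in> I"
    have c2: "Ap k \<union> (A k \<inter> B) \<subseteq> U \<union> B'" for k B B' using ApA[of k] AU[of k] by blast
    show "X \<subseteq> Y \<or> Y \<subseteq> X"
      using X Y unfolding I_def
      apply (elim UnE CollectE exE conjE)
      subgoal by (metis c1 nat_le_linear)
      subgoal by (metis c2)
      subgoal by (metis c2)
      subgoal using I0c by blast
      done
  qed
  have emp: "{} \<in> I" unfolding I_def using I0s(2) by (auto intro!: exI[of _ 0] simp: Ap_def)
  have sp: "space M \<in> I" unfolding I_def using I0s(3) Usp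
    by (auto intro!: exI[of _ "space M"] simp: Un_absorb1)
  have UI: "U \<in> I" unfolding I_def using I0s(2) by auto
  have AkI: "A k \<in> I" for k
  proof -
    have "A k = Ap k \<union> (A k \<inter> space M)" using ApA[of k] Asp[of k] by blast
    then show ?thesis unfolding I_def using I0s(3) by blast
  qed
  have ApI: "Ap k \<in> I" for k
  proof -
    have "Ap k = Ap k \<union> (A k \<inter> {})" by simp
    then show ?thesis unfolding I_def using I0s(2) by blast
  qed
  have least: "\<exists>j. x \<in> A j - Ap j" if "x \<in> A k" for x k
  proof -
    from that have "\<exists>k. x \<in> A k" by blast
    then obtain j where j: "x \<in> A j" "\<forall>m<j. x \<notin> A m" by (auto simp: exists_least_iff[of "\<lambda>k. x \<in> A k"])
    then have "x \<notin> Ap j" by (cases j) (auto simp: Ap_def)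
    then show ?thesis using j by blast
  qed
  have gen: "sigma_sets (space M) I = sets M"
  proof
    show "sigma_sets (space M) I \<subseteq> sets M" using sets.sigma_sets_subset[OF I_sets] .
  next
    have IP: "I \<subseteq> Pow (space M)" using I_sets sets.sets_into_space by blast
    interpret S: sigma_algebra "space M" "sigma_sets (space M) I"
      using sigma_algebra_sigma_sets[OF IP] .
    have "I0 \<subseteq> sigma_sets (space M) I"
    proof
      fix B assume B: "B \<in> I0"
      have Bsp: "B \<subseteq> space M" using B I0s(1) sets.sets_into_space by blast
      have eq: "B = (\<Union>k. (Ap k \<union> (A k \<inter> B)) - Ap k) \<union> ((U \<union> B) - U)"
      proof
        show "B \<subseteq> (\<Union>k. (Ap k \<union> (A k \<inter> B)) - Ap k) \<union> ((U \<union> B) - U)"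
        proof
          fix x assume x: "x \<in> B"
          show "x \<in> (\<Union>k. (Ap k \<union> (A k \<inter> B)) - Ap k) \<union> ((U \<union> B) - U)"
          proof (cases "x \<in> U")
            case True
            then obtain k where "x \<in> A k" by (auto simp: U_def)
            then obtain j where "x \<in> A j - Ap j" using least by blast
            then show ?thesis using x by blast
          next
            case False then show ?thesis using x by blast
          qed
        qed
      qed blast
      have p1: "(Ap k \<union> (A k \<inter> B)) - Ap k \<in> sigma_sets (space M) I" for k
        apply (rule S.Diff)
        using B ApI unfolding I_def by (auto intro: sigma_sets.Basic)
      have p2: "(U \<union> B) - U \<in> sigma_sets (space M) I"
        apply (rule S.Diff)
        using B UI unfolding I_def by (auto intro: sigma_sets.Basic)
      have "(\<Union>k. (Ap k \<union> (A k \<inter> B)) - Ap k) \<in> sigma_sets (space M) I"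
        using p1 by (intro S.countable_UN) auto
      then show "B \<in> sigma_sets (space M) I" using p2 eq by (metis S.Un)
    qed
    then have "sigma_sets (space M) I0 \<subseteq> sigma_sets (space M) I"
      by (rule S.sigma_sets_subset)
    then show "sets M \<subseteq> sigma_sets (space M) I" using I0s(4) by simp
  qed
  have IG: "I \<in> chain_gens M" using I_sets chain emp sp gen by (auto simp: chain_gens_def)
  define Xs where "Xs k = A k - Ap k" for k
  have rng: "range Xs \<subseteq> chain_alg I"
  proof safe
    fix k
    have "chain_rep I (Xs k) 1 (\<lambda>_. A k) (\<lambda>_. Ap k)"
      using AkI ApI ApA by (auto simp: chain_rep_def Xs_def)
    then show "Xs k \<in> chain_alg I" by (auto simp: chain_alg_def)
  qed
  have dj: "disjoint_family Xs"
    unfolding disjoint_family_on_def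
  proof (intro ballI impI)
    fix m n :: nat assume "m \<noteq> n"
    then have "m < n \<or> n < m" by arith
    then show "Xs m \<inter> Xs n = {}" using Ap_le by (auto simp: Xs_def)
  qed
  have UX: "(\<Union>k. Xs k) = U"
  proof
    show "(\<Union>k. Xs k) \<subseteq> U" using AU by (auto simp: Xs_def)
    show "U \<subseteq> (\<Union>k. Xs k)" using least by (auto simp: U_def Xs_def)
  qed
  have Ualg: "(\<Union>k. Xs k) \<in> chain_alg I"
  proof -
    have "chain_rep I U 1 (\<lambda>_. U) (\<lambda>_. {})"
      using UI emp by (auto simp: chain_rep_def)
    then show ?thesis using UX by (auto simp: chain_alg_def)
  qed
  have s: "(\<lambda>k. mu_chain v I (Xs k)) sums mu_chain v I (\<Union>k. Xs k)"
    using cont IG rng dj Ualg unfolding continuous_sf_def by blast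
  have muX: "mu_chain v I (Xs k) = v (Ap (Suc k)) - v (Ap k)" for k
    unfolding Xs_def using mu_chain_diff[OF chain AkI ApI ApA] by (simp add: Ap_def)
  have muU: "mu_chain v I (\<Union>k. Xs k) = v U"
    using mu_chain_diff[OF chain UI emp] UX v0 by simp
  have "(\<lambda>n. \<Sum>k<n. v (Ap (Suc k)) - v (Ap k)) \<longlonglongrightarrow> v U"
    using s unfolding sums_def muX muU .
  moreover have "(\<Sum>k<n. v (Ap (Suc k)) - v (Ap k)) = v (Ap n)" for n
    using sum_lessThan_telescope[of "\<lambda>k. v (Ap k)" n] by (simp add: Ap_def v0)
  ultimately have "(\<lambda>n. v (Ap n)) \<longlonglongrightarrow> v U" by simp
  from LIMSEQ_Suc[OF this] show ?thesis by (simp add: Ap_def U_def)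
qed


lemma set_int_mono_set:
  fixes h :: "real \<Rightarrow> real"
  assumes "set_integrable lborel A h" "set_integrable lborel B h" "A \<subseteq> B"
    "\<And>x. x \<in> B \<Longrightarrow> 0 \<le> h x"
  shows "(LBINT x:A. h x) \<le> (LBINT x:B. h x)"
  using assms unfolding set_integrable_def set_lebesgue_integral_def
  by (intro integral_mono) (auto split: split_indicator)

theorem theorem9:
  fixes M :: "'a measure" and v :: "'a set \<Rightarrow> real"
    and fs :: "nat \<Rightarrow> 'a \<Rightarrow> real" and f :: "'a \<Rightarrow> real"
  assumes "chain_gens M \<noteq> {}"
    and "nondecreasing_sf M v" and "continuous_sf M v" and "v {} = 0"
    and "\<And>n. fs n \<in> borel_measurable M" and "f \<in> borel_measurable M"
    and "\<And>n. choquet_integrable M v (fs n)" and "choquet_integrable M v f"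
    and "\<And>\<omega> n. \<omega> \<in> space M \<Longrightarrow> fs n \<omega> \<le> fs (Suc n) \<omega>"
    and "\<exists>N. v_null M v N \<and> (\<forall>\<omega>\<in>space M - N. (\<lambda>n. fs n \<omega>) \<longlonglongrightarrow> f \<omega>)"
  shows "(\<lambda>n. choquet M v (fs n)) \<longlonglongrightarrow> choquet M v f"
proof -
  obtain I0 where I0: "I0 \<in> chain_gens M" using assms(1) by blast
  obtain N where N: "v_null M v N" and conv: "\<forall>\<omega>\<in>space M - N. (\<lambda>n. fs n \<omega>) \<longlonglongrightarrow> f \<omega>"
    using assms(10) by blast
  have Ns: "N \<in> sets M" using N by (simp add: v_null_def)
  define G where "G n z = v {\<omega>\<in>space M. z < fs n \<omega>}" for n z
  define Gf where "Gf z = v {\<omega>\<in>space M. z < f \<omega>}" for z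
  have meas: "{\<omega>\<in>space M. z < fs n \<omega>} \<in> sets M" for n z
    using assms(5)[of n] by measurable
  have measf: "{\<omega>\<in>space M. z < f \<omega>} \<in> sets M" for z
    using assms(6) by measurable
  have Gmono: "G n z \<le> G (Suc n) z" for n z
  proof -
    have "{\<omega>\<in>space M. z < fs n \<omega>} \<subseteq> {\<omega>\<in>space M. z < fs (Suc n) \<omega>}"
      using assms(9) by (auto intro: less_le_trans)
    then show ?thesis unfolding G_def using assms(2) meas unfolding nondecreasing_sf_def by blast
  qed
  have Gconv: "(\<lambda>n. G n z) \<longlonglongrightarrow> Gf z" for z
  proof -
    define An where "An n = (space M - N) \<inter> {\<omega>\<in>space M. z < fs n \<omega>}" for n
    have Ans: "An n \<in> sets M" for n unfolding An_def using meas Ns by auto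
    have Aninc: "An n \<subseteq> An (Suc n)" for n
      unfolding An_def using assms(9) by (auto intro: less_le_trans)
    have UA: "(\<Union>n. An n) = (space M - N) \<inter> {\<omega>\<in>space M. z < f \<omega>}"
    proof (intro equalityI subsetI)
      fix x assume "x \<in> (\<Union>n. An n)"
      then obtain n where x: "x \<in> space M" "x \<notin> N" "z < fs n x" by (auto simp: An_def)
      have "incseq (\<lambda>n. fs n x)" using assms(9) x(1) by (simp add: incseq_SucI)
      then have "fs n x \<le> f x" using incseq_le conv x by blast
      then show "x \<in> (space M - N) \<inter> {\<omega>\<in>space M. z < f \<omega>}" using x by auto
    next
      fix x assume x: "x \<in> (space M - N) \<inter> {\<omega>\<in>space M. z < f \<omega>}"
      then have "eventually (\<lambda>n. z < fs n x) sequentially"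
        using conv order_tendstoD(1) by blast
      then obtain n where "z < fs n x" by (auto simp: eventually_sequentially)
      then show "x \<in> (\<Union>n. An n)" using x by (auto simp: An_def)
    qed
    have "(\<lambda>n. v (An n)) \<longlonglongrightarrow> v (\<Union>n. An n)"
      by (rule cont_below[of I0 M v An, OF I0 assms(3) assms(4) Ans Aninc])
    moreover have "v (An n) = G n z" for n
      using N meas unfolding v_null_def An_def G_def by auto
    moreover have "v (\<Union>n. An n) = Gf z"
      using N measf unfolding v_null_def UA Gf_def by auto
    ultimately show ?thesis by simp
  qed
  have Gle: "G n z \<le> Gf z" for n z
    using incseq_le[OF incseq_SucI[of "\<lambda>n. G n z", OF Gmono] Gconv] .
  have G0le: "G 0 z \<le> G n z" for n z
    using incseq_SucI[of "\<lambda>n. G n z", OF Gmono] by (simp add: incseq_def)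
  have SI: "set_integrable lborel {y..} (G n)" for n y
    using assms(7)[of n] unfolding choquet_integrable_def G_def by blast
  have SIf: "set_integrable lborel {y..} Gf" for y
    using assms(8) unfolding choquet_integrable_def Gf_def by blast
  define aux where "aux n y = y * v (space M) + (LBINT z:{y..}. G n z)" for n y
  define auxf where "auxf y = y * v (space M) + (LBINT z:{y..}. Gf z)" for y
  have aux_eq: "choquet_aux M v (fs n) = aux n" for n
    by (rule ext) (simp add: choquet_aux_def aux_def G_def)
  have auxf_eq: "choquet_aux M v f = auxf"
    by (rule ext) (simp add: choquet_aux_def auxf_def Gf_def)
  have ntriv: "\<not> trivial_limit (at_bot :: real filter)" by simp
  have cn: "(aux n \<longlongrightarrow> choquet M v (fs n)) at_bot" for n
  proof -
    obtain c where c: "(choquet_aux M v (fs n) \<longlongrightarrow> c) at_bot"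
      using assms(7)[of n] unfolding choquet_integrable_def by blast
    then have "choquet M v (fs n) = c" unfolding choquet_def using tendsto_Lim[OF ntriv] by blast
    then show ?thesis using c aux_eq by simp
  qed
  have cf: "(auxf \<longlongrightarrow> choquet M v f) at_bot"
  proof -
    obtain c where c: "(choquet_aux M v f \<longlongrightarrow> c) at_bot"
      using assms(8) unfolding choquet_integrable_def by blast
    then have "choquet M v f = c" unfolding choquet_def using tendsto_Lim[OF ntriv] by blast
    then show ?thesis using c auxf_eq by simp
  qed
  define c where "c n = choquet M v (fs n)" for n
  define cc where "cc = choquet M v f"
  have aux_le: "aux n y \<le> auxf y" for n y
    unfolding aux_def auxf_def using set_integral_mono[OF SI SIf] Gle by simp
  have c_le: "c n \<le> cc" for n
    unfolding c_def cc_def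
    by (rule tendsto_le[OF _ cf cn]) (auto simp: aux_le)
  have h_mono: "aux n y - aux 0 y \<le> aux n y' - aux 0 y'" if "y' \<le> y" for n y y'
  proof -
    have e: "aux n t - aux 0 t = (LBINT z:{t..}. G n z - G 0 z)" for t
      unfolding aux_def using set_integral_diff(2)[OF SI SI] by simp
    show ?thesis unfolding e
      by (rule set_int_mono_set) (use that G0le in \<open>auto intro: set_integral_diff(1)[OF SI SI]\<close>)
  qed
  have c_ge: "aux n y - aux 0 y \<le> c n - c 0" for n y
  proof (rule tendsto_lowerbound[OF _ _ ntriv])
    show "((\<lambda>t. aux n t - aux 0 t) \<longlongrightarrow> c n - c 0) at_bot"
      unfolding c_def by (intro tendsto_diff cn)
    show "eventually (\<lambda>t. aux n y - aux 0 y \<le> aux n t - aux 0 t) at_bot"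
      unfolding eventually_at_bot_linorder by (intro exI[of _ y]) (auto intro: h_mono)
  qed
  have auxconv: "(\<lambda>n. aux n y) \<longlonglongrightarrow> auxf y" for y
  proof -
    have "(\<lambda>n. LBINT z:{y..}. G n z) \<longlonglongrightarrow> (LBINT z:{y..}. Gf z)"
      unfolding set_lebesgue_integral_def
    proof (rule integral_dominated_convergence[where w="\<lambda>z. indicator {y..} z *\<^sub>R (\<bar>G 0 z\<bar> + \<bar>Gf z\<bar>)"])
      show "(\<lambda>z. indicator {y..} z *\<^sub>R Gf z) \<in> borel_measurable lborel"
        using SIf[of y] unfolding set_integrable_def by auto
      show "(\<lambda>z. indicator {y..} z *\<^sub>R G i z) \<in> borel_measurable lborel" for i
        using SI[where n=i and y=y] unfolding set_integrable_def by auto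
      have "set_integrable lborel {y..} (\<lambda>z. \<bar>G 0 z\<bar> + \<bar>Gf z\<bar>)"
        by (intro set_integral_add(1) set_integrable_abs SI SIf)
      then show "integrable lborel (\<lambda>z. indicator {y..} z *\<^sub>R (\<bar>G 0 z\<bar> + \<bar>Gf z\<bar>))"
        unfolding set_integrable_def .
      show "AE z in lborel. (\<lambda>i. indicator {y..} z *\<^sub>R G i z) \<longlonglongrightarrow> indicator {y..} z *\<^sub>R Gf z"
        by (intro AE_I2 tendsto_scaleR tendsto_const Gconv)
      show "AE z in lborel. norm (indicator {y..} z *\<^sub>R G i z) \<le> indicator {y..} z *\<^sub>R (\<bar>G 0 z\<bar> + \<bar>Gf z\<bar>)" for i
      proof (intro AE_I2)
        fix z
        have "\<bar>G i z\<bar> \<le> \<bar>G 0 z\<bar> + \<bar>Gf z\<bar>" using G0le[of z i] Gle[of i z] by linarith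
        then show "norm (indicator {y..} z *\<^sub>R G i z) \<le> indicator {y..} z *\<^sub>R (\<bar>G 0 z\<bar> + \<bar>Gf z\<bar>)"
          by (auto split: split_indicator)
      qed
    qed
    then show ?thesis unfolding aux_def auxf_def by (intro tendsto_add tendsto_const)
  qed
  show ?thesis
    unfolding c_def[symmetric] cc_def[symmetric]
  proof (rule order_tendstoI)
    fix a assume "cc < a"
    then show "eventually (\<lambda>n. c n < a) sequentially" using c_le by (intro always_eventually allI) (meson le_less_trans)
  next
    fix a assume a: "a < cc"
    define e where "e = cc - a"
    have e: "e > 0" using a by (simp add: e_def)
    have "((\<lambda>t. auxf t - aux 0 t) \<longlongrightarrow> cc - c 0) at_bot"
      unfolding c_def cc_def by (intro tendsto_diff cf cn)
    then have "eventually (\<lambda>t. cc - c 0 - e/2 < auxf t - aux 0 t) at_bot"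
      using e by (intro order_tendstoD(1)) auto
    then obtain y where y: "cc - c 0 - e/2 < auxf y - aux 0 y"
      unfolding eventually_at_bot_linorder by auto
    have "eventually (\<lambda>n. auxf y - e/2 < aux n y) sequentially"
      using auxconv[of y] e by (intro order_tendstoD(1)) auto
    then show "eventually (\<lambda>n. a < c n) sequentially"
    proof (rule eventually_mono)
      fix n assume "auxf y - e/2 < aux n y"
      then show "a < c n" using c_ge[of n y] y e_def by linarith
    qed
  qed
qed

end
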